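(* Let $n\geqslant 2$ and let $\alpha,\beta\in\mathcal{AM}_n$ be two elements of rank $n-1$. Then: (1) if $n\equiv 0$ or $n\equiv 3\pmod 4$, then $\alpha\mathscr{J}\beta$ in $\mathcal{AM}_n$; (2) if $n\equiv 1$ or $n\equiv 2\pmod 4$, then $\alpha\mathscr{J}\beta$ in $\mathcal{AM}_n$ if and only if $\mathrm{d}(\alpha)$ and $\mathrm{d}(\beta)$ have the same parity.
   Context: Let $\Omega_n=\{1<2<\cdots<n\}$ and $\mathcal{I}_n$ the monoid of all partial injective maps of $\Omega_n$, composed left to right; the rank of $\alpha$ is $|\mathrm{Im}(\alpha)|$. $\mathcal{AI}_n$ is the set of all $\alpha\in\mathcal{I}_n$ with $\alpha=\sigma|_{\mathrm{Dom}(\alpha)}$ for some even permutation $\sigma$ of $\Omega_n$. $\mathcal{PMI}_n$ is the set of monotone (order-preserving or order-reversing) elements of $\mathcal{I}_n$ and $\mathcal{AM}_n=\mathcal{AI}_n\cap\mathcal{PMI}_n$, a monoid. For $\alpha$ of rank $n-1$, $\mathrm{d}(\alpha)$ is the unique element of $\Omega_n\setminus\mathrm{Dom}(\alpha)$. $\mathscr{J}$ is Green's relation: $a\mathscr{J}b$ iff $MaM=MbM$. *)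

theory Defs
  imports "HOL-Combinatorics.Permutations"
begin

definition Omega :: "nat \<Rightarrow> nat set" where
  "Omega n = {1..n}"

definition PI :: "nat \<Rightarrow> (nat \<Rightarrow> nat option) set" where
  "PI n = {f. dom f \<subseteq> Omega n \<and> ran f \<subseteq> Omega n \<and> inj_on f (dom f)}"

text \<open>Composition, left to right: first a then b.\<close>
definition pcomp :: "(nat \<Rightarrow> nat option) \<Rightarrow> (nat \<Rightarrow> nat option) \<Rightarrow> (nat \<Rightarrow> nat option)" where
  "pcomp a b = b \<circ>\<^sub>m a"

definition rank :: "(nat \<Rightarrow> nat option) \<Rightarrow> nat" where
  "rank f = card (ran f)"

definition AI :: "nat \<Rightarrow> (nat \<Rightarrow> nat option) set" where
  "AI n = {f \<in> PI n. \<exists>\<sigma>. \<sigma> permutes Omega n \<and> evenperm \<sigma> \<and>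
                         (\<forall>x \<in> dom f. f x = Some (\<sigma> x))}"

definition order_preserving_p :: "(nat \<Rightarrow> nat option) \<Rightarrow> bool" where
  "order_preserving_p f = (\<forall>x \<in> dom f. \<forall>y \<in> dom f. x \<le> y \<longrightarrow> the (f x) \<le> the (f y))"

definition order_reversing_p :: "(nat \<Rightarrow> nat option) \<Rightarrow> bool" where
  "order_reversing_p f = (\<forall>x \<in> dom f. \<forall>y \<in> dom f. x \<le> y \<longrightarrow> the (f y) \<le> the (f x))"

definition PMI :: "nat \<Rightarrow> (nat \<Rightarrow> nat option) set" where
  "PMI n = {f \<in> PI n. order_preserving_p f \<or> order_reversing_p f}"

definition AM :: "nat \<Rightarrow> (nat \<Rightarrow> nat option) set" where
  "AM n = AI n \<inter> PMI n"

definition ideal2 :: "(nat \<Rightarrow> nat option) set \<Rightarrow> (nat \<Rightarrow> nat option) \<Rightarrow> (nat \<Rightarrow> nat option) set" where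
  "ideal2 M a = {pcomp (pcomp s a) t | s t. s \<in> M \<and> t \<in> M}"

definition greenJ :: "(nat \<Rightarrow> nat option) set \<Rightarrow> (nat \<Rightarrow> nat option) \<Rightarrow> (nat \<Rightarrow> nat option) \<Rightarrow> bool" where
  "greenJ M a b \<longleftrightarrow> ideal2 M a = ideal2 M b"

text \<open>For f of rank n-1, the unique point of Omega_n not in the domain.\<close>
definition dpt :: "nat \<Rightarrow> (nat \<Rightarrow> nat option) \<Rightarrow> nat" where
  "dpt n f = (THE x. x \<in> Omega n - dom f)"

end

theory Submission
  imports Defs
begin

definition cyc :: "nat \<Rightarrow> nat \<Rightarrow> nat \<Rightarrow> nat" where
  "cyc i j x = (if x = i then j else if i < j \<and> i < x \<and> x \<le> j then x - 1
     else if j < i \<and> j \<le> x \<and> x < i then x + 1 else x)"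

lemma cyc_up: "cyc i (i + k) permutes {i..i+k} \<and> evenperm (cyc i (i+k)) = even k"
proof (induction k)
  case 0
  have "cyc i i = id" by (auto simp: cyc_def)
  then show ?case by (simp add: permutes_id id_def)
next
  case (Suc k)
  have eq: "cyc i (i + Suc k) = transpose (i+k) (i+k+1) \<circ> cyc i (i+k)"
    by (auto simp: cyc_def fun_eq_iff transpose_def)
  have p1: "cyc i (i+k) permutes {i..i+Suc k}"
    using Suc.IH by (rule conjE) (erule permutes_subset, auto)
  have p2: "transpose (i+k) (i+k+1) permutes {i..i+Suc k}"
    by (rule permutes_swap_id) auto
  have "permutation (cyc i (i+k))" using p1 permutes_imp_permutation by blast
  then have "evenperm (cyc i (i + Suc k)) = (evenperm (transpose (i+k) (i+k+1)) = evenperm (cyc i (i+k)))"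
    unfolding eq by (intro evenperm_comp permutation_swap_id)
  then have "evenperm (cyc i (i + Suc k)) = odd k" using Suc.IH by (simp add: evenperm_swap)
  moreover have "cyc i (i + Suc k) permutes {i..i+Suc k}" unfolding eq using permutes_compose[OF p1 p2] .
  ultimately show ?case by simp
qed

lemma cyc_down: "cyc (j + k) j permutes {j..j+k} \<and> evenperm (cyc (j+k) j) = even k"
proof (induction k)
  case 0
  have "cyc j j = id" by (auto simp: cyc_def)
  then show ?case by (simp add: permutes_id id_def)
next
  case (Suc k)
  have eq: "cyc (j + Suc k) j = cyc (j+k) j \<circ> transpose (j+k) (j+k+1)"
    by (auto simp: cyc_def fun_eq_iff transpose_def)
  have p1: "cyc (j+k) j permutes {j..j+Suc k}"
    using Suc.IH by (rule conjE) (erule permutes_subset, auto)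
  have p2: "transpose (j+k) (j+k+1) permutes {j..j+Suc k}"
    by (rule permutes_swap_id) auto
  have "permutation (cyc (j+k) j)" using p1 permutes_imp_permutation by blast
  then have "evenperm (cyc (j + Suc k) j) = (evenperm (cyc (j+k) j) = evenperm (transpose (j+k) (j+k+1)))"
    unfolding eq by (intro evenperm_comp permutation_swap_id)
  then have "evenperm (cyc (j + Suc k) j) = odd k" using Suc.IH by (simp add: evenperm_swap)
  moreover have "cyc (j + Suc k) j permutes {j..j+Suc k}" unfolding eq using permutes_compose[OF p2 p1] .
  ultimately show ?case by simp
qed

lemma cyc_perm:
  assumes "i \<in> {1..n}" "j \<in> {1..n}"
  shows "cyc i j permutes {1..n} \<and> evenperm (cyc i j) = even (i + j)"
proof (cases "i \<le> j")
  case True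
  then obtain k where k: "j = i + k" using le_Suc_ex by blast
  have "{i..i+k} \<subseteq> {1..n}" using k assms by auto
  then have "cyc i j permutes {1..n}" using cyc_up[of i k] k permutes_subset by blast
  moreover have "even (i + j) = even k" using k by presburger
  ultimately show ?thesis using cyc_up[of i k] k by simp
next
  case False
  then obtain k where k: "i = j + k" using le_Suc_ex[of j i] by auto
  have "{j..j+k} \<subseteq> {1..n}" using k assms by auto
  then have "cyc i j permutes {1..n}" using cyc_down[of j k] k permutes_subset by blast
  moreover have "even (i + j) = even k" using k by presburger
  ultimately show ?thesis using cyc_down[of j k] k by simp
qed

lemma cyc_mono: "x \<noteq> i \<Longrightarrow> y \<noteq> i \<Longrightarrow> x < y \<Longrightarrow> cyc i j x < cyc i j y"
  by (auto simp: cyc_def)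

lemma cyc_at: "cyc i j i = j" by (simp add: cyc_def)

definition rv :: "nat \<Rightarrow> nat \<Rightarrow> nat" where
  "rv n x = (if 1 \<le> x \<and> x \<le> n then Suc n - x else x)"

lemma rv_perm: "rv n permutes {1..n} \<and> evenperm (rv n) = even (n div 2)"
proof (induction n)
  case 0
  have "rv 0 = id" by (auto simp: rv_def)
  then show ?case by (simp add: permutes_id id_def)
next
  case (Suc n)
  have eq: "rv (Suc n) = cyc (Suc n) 1 \<circ> rv n"
    by (auto simp: cyc_def rv_def fun_eq_iff)
  have p1: "rv n permutes {1..Suc n}"
    using Suc.IH by (rule conjE) (erule permutes_subset, auto)
  have p2: "cyc (Suc n) 1 permutes {1..Suc n} \<and> evenperm (cyc (Suc n) 1) = even (Suc n + 1)"
    by (rule cyc_perm) auto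
  have "permutation (rv n)" using p1 permutes_imp_permutation by blast
  moreover have "permutation (cyc (Suc n) 1)" using p2 permutes_imp_permutation by blast
  ultimately have "evenperm (rv (Suc n)) = (evenperm (cyc (Suc n) 1) = evenperm (rv n))"
    unfolding eq by (intro evenperm_comp)
  moreover have "(even (Suc n + 1) = even (n div 2)) = even (Suc n div 2)" by presburger
  ultimately have "evenperm (rv (Suc n)) = even (Suc n div 2)" using Suc.IH p2 by simp
  moreover have "rv (Suc n) permutes {1..Suc n}" unfolding eq using permutes_compose[OF p1] p2 by blast
  ultimately show ?case by simp
qed

definition smono :: "nat set \<Rightarrow> (nat \<Rightarrow> nat) \<Rightarrow> bool" where
  "smono A f = (\<forall>x\<in>A. \<forall>y\<in>A. x < y \<longrightarrow> f x < f y)"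

lemma half_uniq:
  assumes "smono A f" "smono A g" "g ` A \<subseteq> f ` A"
  shows "x \<in> A \<Longrightarrow> f x \<le> g x"
proof (induction x rule: less_induct)
  case (less x)
  show ?case
  proof (rule ccontr)
    assume "\<not> f x \<le> g x"
    then have lt: "g x < f x" by simp
    obtain y where y: "y \<in> A" "g x = f y" using assms(3) less.prems by blast
    have "y < x"
    proof (rule ccontr)
      assume "\<not> y < x"
      then have "x \<le> y" by simp
      then have "f x \<le> f y" using assms(1) y(1) less.prems unfolding smono_def
        by (metis order_le_less)
      then show False using lt y by simp
    qed
    then have "f y \<le> g y" using less.IH y(1) by blast
    moreover have "g y < g x" using assms(2) \<open>y < x\<close> y(1) less.prems unfolding smono_def by blast
    ultimately show False using y by simp
  qed
qed

lemma uniq: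
  assumes "smono A f" "smono A g" "g ` A = f ` A" "x \<in> A"
  shows "f x = g x"
  using half_uniq[OF assms(1,2)] half_uniq[OF assms(2,1)] assms(3,4) by (metis equalityE le_antisym)

lemma perm_img:
  assumes "p permutes S" "i \<in> S" "p i = j"
  shows "p ` (S - {i}) = S - {j}"
proof -
  have "p ` (S - {i}) = p ` S - p ` {i}" using permutes_inj[OF assms(1)] by (simp add: image_set_diff)
  then show ?thesis using permutes_image[OF assms(1)] assms by simp
qed

lemma perm_is_cyc:
  assumes "p permutes {1..n}" "i \<in> {1..n}" "j \<in> {1..n}" "p i = j" "smono ({1..n} - {i}) p"
  shows "p = cyc i j"
proof
  fix x
  show "p x = cyc i j x"
  proof (cases "x \<in> {1..n} - {i}")
    case True
    have c: "cyc i j permutes {1..n}" using cyc_perm assms by blast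
    have "smono ({1..n} - {i}) (cyc i j)" unfolding smono_def using cyc_mono by blast
    moreover have "p ` ({1..n} - {i}) = cyc i j ` ({1..n} - {i})"
      using perm_img[OF assms(1,2,4)] perm_img[OF c assms(2) cyc_at] by simp
    ultimately show ?thesis using uniq assms(5) True by metis
  next
    case False
    have c: "cyc i j permutes {1..n}" using cyc_perm assms by blast
    show ?thesis
    proof (cases "x = i")
      case True then show ?thesis using assms(4) cyc_at by simp
    next
      case False
      then have "x \<notin> {1..n}" using \<open>x \<notin> {1..n} - {i}\<close> by blast
      then show ?thesis using permutes_not_in[OF assms(1)] permutes_not_in[OF c] by simp
    qed
  qed
qed

definition mon :: "(nat \<Rightarrow> nat) \<Rightarrow> nat set \<Rightarrow> bool" where
  "mon s A = ((\<forall>x\<in>A. \<forall>y\<in>A. x \<le> y \<longrightarrow> s x \<le> s y) \<or> (\<forall>x\<in>A. \<forall>y\<in>A. x \<le> y \<longrightarrow> s y \<le> s x))"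

definition Ep :: "nat \<Rightarrow> nat \<Rightarrow> nat \<Rightarrow> bool" where
  "Ep n i j = (\<exists>s. s permutes {1..n} \<and> evenperm s \<and> s i = j \<and> mon s ({1..n} - {i}))"

lemma Ep_imp:
  assumes "Ep n i j" "i \<in> {1..n}" "j \<in> {1..n}"
  shows "even (i + j) \<or> even (i + j + n + 1 + n div 2)"
proof -
  obtain s where s: "s permutes {1..n}" "evenperm s" "s i = j" "mon s ({1..n} - {i})"
    using assms(1) Ep_def by blast
  have inj: "inj s" using permutes_inj[OF s(1)] .
  show ?thesis
  proof (cases "\<forall>x\<in>{1..n}-{i}. \<forall>y\<in>{1..n}-{i}. x \<le> y \<longrightarrow> s x \<le> s y")
    case True
    have "smono ({1..n}-{i}) s" unfolding smono_def
    proof (intro ballI impI)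
      fix x y assume xy: "x \<in> {1..n}-{i}" "y \<in> {1..n}-{i}" "x < y"
      then have "s x \<le> s y" using True by auto
      moreover have "s x \<noteq> s y" using inj xy(3) by (metis injD less_irrefl)
      ultimately show "s x < s y" by simp
    qed
    then have "s = cyc i j" by (rule perm_is_cyc[OF s(1) assms(2,3) s(3)])
    then show ?thesis using s(2) cyc_perm[OF assms(2,3)] by simp
  next
    case False
    then have D: "\<forall>x\<in>{1..n}-{i}. \<forall>y\<in>{1..n}-{i}. x \<le> y \<longrightarrow> s y \<le> s x"
      using s(4) False unfolding mon_def by blast
    define t where "t = rv n \<circ> s"
    have r: "rv n permutes {1..n}" using rv_perm by blast
    have tp: "t permutes {1..n}" unfolding t_def using permutes_compose[OF s(1) r] .
    have k: "n + 1 - j \<in> {1..n}" using assms(3) by auto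
    have ti: "t i = n + 1 - j" unfolding t_def using s(3) assms(3) by (simp add: rv_def)
    have sm: "smono ({1..n}-{i}) t"
      unfolding smono_def
    proof (intro ballI impI)
      fix x y assume xy: "x \<in> {1..n}-{i}" "y \<in> {1..n}-{i}" "x < y"
      have "s y \<le> s x" using D xy by auto
      moreover have "s x \<noteq> s y" using inj xy(3) by (metis injD less_irrefl)
      ultimately have "s y < s x" by simp
      moreover have "s x \<in> {1..n}" "s y \<in> {1..n}" using xy permutes_image[OF s(1)] by auto
      ultimately show "t x < t y" unfolding t_def by (auto simp: rv_def)
    qed
    have "t = cyc i (n + 1 - j)" using perm_is_cyc[OF tp assms(2) k ti sm] .
    then have "evenperm t = even (i + (n + 1 - j))" using cyc_perm[OF assms(2) k] by simp
    moreover have "evenperm t = (evenperm (rv n) = evenperm s)" unfolding t_def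
      by (intro evenperm_comp permutes_imp_permutation[OF _ r] permutes_imp_permutation[OF _ s(1)]) auto
    ultimately have "even (i + (n + 1 - j)) = even (n div 2)" using s(2) rv_perm by simp
    moreover have "even (i + (n + 1 - j)) = even (i + j + n + 1)" proof -
      have "j \<le> n" using assms(3) by simp
      then show ?thesis by presburger
    qed
    ultimately have "even (i + j + n + 1) = even (n div 2)" by simp
    then show ?thesis by auto
  qed
qed

lemma imp_Ep:
  assumes "even (i + j) \<or> even (i + j + n + 1 + n div 2)" "i \<in> {1..n}" "j \<in> {1..n}"
  shows "Ep n i j"
proof (cases "even (i + j)")
  case True
  have "mon (cyc i j) ({1..n} - {i})" unfolding mon_def
    by (metis cyc_mono Diff_iff insertI1 order_le_less)
  then show ?thesis unfolding Ep_def using cyc_perm[OF assms(2,3)] True cyc_at by blast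
next
  case False
  then have h: "even (i + j + n + 1 + n div 2)" using assms(1) by blast
  have k: "n + 1 - j \<in> {1..n}" using assms(3) by auto
  define t where "t = rv n \<circ> cyc i (n + 1 - j)"
  have c: "cyc i (n+1-j) permutes {1..n}" using cyc_perm[OF assms(2) k] by blast
  have r: "rv n permutes {1..n}" using rv_perm by blast
  have tp: "t permutes {1..n}" unfolding t_def using permutes_compose[OF c r] .
  have ti: "t i = j" unfolding t_def using cyc_at[of i "n+1-j"] assms(3) by (auto simp: rv_def)
  have "evenperm t = (evenperm (rv n) = evenperm (cyc i (n+1-j)))" unfolding t_def
    by (intro evenperm_comp permutes_imp_permutation[OF _ r] permutes_imp_permutation[OF _ c]) auto
  then have E: "evenperm t = (even (n div 2) = even (i + (n + 1 - j)))"
    using rv_perm cyc_perm[OF assms(2) k] by simp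
  have "even (i + (n + 1 - j)) = even (i + j + n + 1)" proof -
      have "j \<le> n" using assms(3) by simp
      then show ?thesis by presburger
    qed
  moreover have "even (i + j + n + 1) = even (n div 2)" using h by simp
  ultimately have "even (i + (n + 1 - j)) = even (n div 2)" by simp
  then have ev: "evenperm t" using E by simp
  have "mon t ({1..n} - {i})" unfolding mon_def
  proof (rule disjI2, intro ballI impI)
    fix x y assume xy: "x \<in> {1..n}-{i}" "y \<in> {1..n}-{i}" "x \<le> y"
    have "cyc i (n+1-j) x \<le> cyc i (n+1-j) y" using xy cyc_mono by (metis Diff_iff insertI1 order_le_less)
    moreover have "cyc i (n+1-j) x \<in> {1..n}" "cyc i (n+1-j) y \<in> {1..n}"
      using xy permutes_image[OF c] by auto
    ultimately show "t y \<le> t x" unfolding t_def by (auto simp: rv_def)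
  qed
  then show ?thesis unfolding Ep_def using tp ev ti by blast
qed


definition restr :: "(nat \<Rightarrow> nat) \<Rightarrow> nat set \<Rightarrow> nat \<Rightarrow> nat option" where
  "restr f A = (\<lambda>x. if x \<in> A then Some (f x) else None)"

lemma perm_in: "p permutes S \<Longrightarrow> x \<in> S \<Longrightarrow> p x \<in> S"
  by (simp add: permutes_in_image)

lemma dom_restr[simp]: "dom (restr f A) = A"
  by (auto simp: restr_def dom_def)

lemma restr_eq: "A = B \<Longrightarrow> (\<And>x. x \<in> A \<Longrightarrow> f x = g x) \<Longrightarrow> restr f A = restr g B"
  by (auto simp: restr_def fun_eq_iff)

lemma pcomp_restr: "pcomp (restr f A) (restr g B) = restr (g \<circ> f) {x \<in> A. f x \<in> B}"
  by (auto simp: pcomp_def restr_def fun_eq_iff map_comp_def)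

lemma pcomp_assoc: "pcomp (pcomp a b) c = pcomp a (pcomp b c)"
  by (auto simp: pcomp_def fun_eq_iff map_comp_def split: option.split)

lemma AM_char: "f \<in> AM n \<longleftrightarrow> (\<exists>s A. A \<subseteq> {1..n} \<and> s permutes {1..n} \<and> evenperm s \<and> mon s A \<and> f = restr s A)"
proof
  assume f: "f \<in> AM n"
  then have pi: "f \<in> PI n" and ai: "f \<in> AI n" and pm: "f \<in> PMI n" by (auto simp: AM_def AI_def)
  obtain s where s: "s permutes {1..n}" "evenperm s" "\<forall>x \<in> dom f. f x = Some (s x)"
    using ai unfolding AI_def Omega_def by blast
  have fe: "f = restr s (dom f)"
    by (rule ext) (use s(3) in \<open>auto simp: restr_def\<close>)
  have "mon s (dom f)" using pm s(3) unfolding PMI_def mon_def order_preserving_p_def order_reversing_p_def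
    by auto
  moreover have "dom f \<subseteq> {1..n}" using pi unfolding PI_def Omega_def by blast
  ultimately show "\<exists>s A. A \<subseteq> {1..n} \<and> s permutes {1..n} \<and> evenperm s \<and> mon s A \<and> f = restr s A"
    using s fe by blast
next
  assume "\<exists>s A. A \<subseteq> {1..n} \<and> s permutes {1..n} \<and> evenperm s \<and> mon s A \<and> f = restr s A"
  then obtain s A where sA: "A \<subseteq> {1..n}" "s permutes {1..n}" "evenperm s" "mon s A" "f = restr s A"
    by blast
  have inj: "inj s" using permutes_inj[OF sA(2)] .
  have ran: "ran f = s ` A" using sA(5) by (auto simp: ran_def restr_def)
  have "s ` A \<subseteq> {1..n}" using sA(1) perm_in[OF sA(2)] by blast
  moreover have "inj_on f (dom f)" using inj sA(5) by (auto simp: inj_on_def restr_def dest: injD)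
  ultimately have "f \<in> PI n" unfolding PI_def Omega_def using sA(1,5) ran by simp
  moreover have "\<forall>x \<in> dom f. f x = Some (s x)" using sA(5) by (auto simp: restr_def split: if_splits)
  then have "f \<in> AI n" unfolding AI_def Omega_def using calculation sA(2,3) by blast
  moreover have "f \<in> PMI n" unfolding PMI_def order_preserving_p_def order_reversing_p_def
    using calculation(1) sA(4,5) unfolding mon_def by (auto simp: restr_def)
  ultimately show "f \<in> AM n" unfolding AM_def by blast
qed

lemma restr_AM: "A \<subseteq> {1..n} \<Longrightarrow> s permutes {1..n} \<Longrightarrow> evenperm s \<Longrightarrow> mon s A \<Longrightarrow> restr s A \<in> AM n"
  using AM_char by blast

lemma mon_comp: "mon s A \<Longrightarrow> mon t (s ` A) \<Longrightarrow> mon (t \<circ> s) A"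
  unfolding mon_def by (simp add: image_iff) (metis (no_types, lifting))

lemma mon_subset: "mon s A \<Longrightarrow> B \<subseteq> A \<Longrightarrow> mon s B"
  unfolding mon_def by blast

lemma AM_closed:
  assumes "a \<in> AM n" "b \<in> AM n" shows "pcomp a b \<in> AM n"
proof -
  obtain s A where a: "A \<subseteq> {1..n}" "s permutes {1..n}" "evenperm s" "mon s A" "a = restr s A"
    using assms(1) AM_char by blast
  obtain t B where b: "B \<subseteq> {1..n}" "t permutes {1..n}" "evenperm t" "mon t B" "b = restr t B"
    using assms(2) AM_char by blast
  let ?C = "{x \<in> A. s x \<in> B}"
  have eq: "pcomp a b = restr (t \<circ> s) ?C" using a(5) b(5) pcomp_restr by simp
  have m1: "mon s ?C" by (rule mon_subset[OF a(4)]) auto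
  have m2: "mon t (s ` ?C)" by (rule mon_subset[OF b(4)]) auto
  have "mon (t \<circ> s) ?C" using mon_comp[OF m1 m2] .
  have ps: "permutation s" by (rule permutes_imp_permutation[OF _ a(2)]) simp
  have pt: "permutation t" by (rule permutes_imp_permutation[OF _ b(2)]) simp
  have mo: "mon (t \<circ> s) ?C" using mon_comp[OF m1 m2] .
  have "evenperm (t \<circ> s)"
    using evenperm_comp[OF pt ps] a(3) b(3) by simp
  moreover note mo
  moreover have "t \<circ> s permutes {1..n}" using permutes_compose[OF a(2) b(2)] .
  moreover have "?C \<subseteq> {1..n}" using a(1) by blast
  ultimately show ?thesis unfolding eq by (intro restr_AM)
qed

lemma mon_inv:
  assumes "s permutes S" "mon s A" shows "mon (inv s) (s ` A)"
proof -
  have inj: "inj s" using permutes_inj[OF assms(1)] .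
  then have iv: "\<And>x. inv s (s x) = x" by simp
  show ?thesis using assms(2) unfolding mon_def
  proof (elim disjE)
    assume h: "\<forall>x\<in>A. \<forall>y\<in>A. x \<le> y \<longrightarrow> s x \<le> s y"
    have "\<forall>u\<in>s`A. \<forall>v\<in>s`A. u \<le> v \<longrightarrow> inv s u \<le> inv s v"
    proof (intro ballI impI)
      fix u v assume "u \<in> s ` A" "v \<in> s ` A" "u \<le> v"
      then obtain x y where xy: "x \<in> A" "y \<in> A" "u = s x" "v = s y" "s x \<le> s y" by blast
      have "x \<le> y"
      proof (rule ccontr)
        assume "\<not> x \<le> y"
        then have "s y \<le> s x" using h xy by auto
        then have "s x = s y" using xy by simp
        then have "x = y" by (simp add: inj_eq[OF inj])
        then show False using \<open>\<not> x \<le> y\<close> by simp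
      qed
      then show "inv s u \<le> inv s v" using xy iv by simp
    qed
    then show "(\<forall>u\<in>s`A. \<forall>v\<in>s`A. u \<le> v \<longrightarrow> inv s u \<le> inv s v) \<or>
      (\<forall>u\<in>s`A. \<forall>v\<in>s`A. u \<le> v \<longrightarrow> inv s v \<le> inv s u)" by blast
  next
    assume h: "\<forall>x\<in>A. \<forall>y\<in>A. x \<le> y \<longrightarrow> s y \<le> s x"
    have "\<forall>u\<in>s`A. \<forall>v\<in>s`A. u \<le> v \<longrightarrow> inv s v \<le> inv s u"
    proof (intro ballI impI)
      fix u v assume "u \<in> s ` A" "v \<in> s ` A" "u \<le> v"
      then obtain x y where xy: "x \<in> A" "y \<in> A" "u = s x" "v = s y" "s x \<le> s y" by blast
      have "y \<le> x"
      proof (rule ccontr)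
        assume "\<not> y \<le> x"
        then have "s y \<le> s x" using h xy by auto
        then have "s x = s y" using xy by simp
        then have "x = y" by (simp add: inj_eq[OF inj])
        then show False using \<open>\<not> y \<le> x\<close> by simp
      qed
      then show "inv s v \<le> inv s u" using xy iv by simp
    qed
    then show "(\<forall>u\<in>s`A. \<forall>v\<in>s`A. u \<le> v \<longrightarrow> inv s u \<le> inv s v) \<or>
      (\<forall>u\<in>s`A. \<forall>v\<in>s`A. u \<le> v \<longrightarrow> inv s v \<le> inv s u)" by blast
  qed
qed

lemma inv_AM:
  assumes "A \<subseteq> {1..n}" "s permutes {1..n}" "evenperm s" "mon s A"
  shows "restr (inv s) (s ` A) \<in> AM n"
proof (rule restr_AM)
  show "s ` A \<subseteq> {1..n}" using assms(1) perm_in[OF assms(2)] by blast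
  show "inv s permutes {1..n}" using permutes_inv[OF assms(2)] .
  show "evenperm (inv s)" using assms(2,3) evenperm_inv permutes_imp_permutation by blast
  show "mon (inv s) (s ` A)" using mon_inv assms(2,4) by blast
qed

lemma id_AM: "A \<subseteq> {1..n} \<Longrightarrow> restr id A \<in> AM n"
  by (rule restr_AM) (auto simp: permutes_id mon_def)

lemma ideal_sub:
  assumes "\<And>a b. a \<in> M \<Longrightarrow> b \<in> M \<Longrightarrow> pcomp a b \<in> M" "a \<in> ideal2 M b"
  shows "ideal2 M a \<subseteq> ideal2 M b"
proof
  fix x assume "x \<in> ideal2 M a"
  then obtain u v where uv: "u \<in> M" "v \<in> M" "x = pcomp (pcomp u a) v" unfolding ideal2_def by blast
  obtain s t where st: "s \<in> M" "t \<in> M" "a = pcomp (pcomp s b) t" using assms(2) unfolding ideal2_def by blast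
  have "x = pcomp (pcomp (pcomp u s) b) (pcomp t v)" using uv(3) st(3) by (simp add: pcomp_assoc)
  then show "x \<in> ideal2 M b" unfolding ideal2_def using assms(1) uv st by blast
qed

lemma J_intro:
  assumes "a \<in> ideal2 (AM n) b" "b \<in> ideal2 (AM n) a"
  shows "greenJ (AM n) a b"
  unfolding greenJ_def using ideal_sub[OF AM_closed assms(1)] ideal_sub[OF AM_closed assms(2)] by (rule equalityI)

lemma in_ideal: "s \<in> M \<Longrightarrow> t \<in> M \<Longrightarrow> a = pcomp (pcomp s b) t \<Longrightarrow> a \<in> ideal2 M b"
  unfolding ideal2_def by blast

lemma G:
  assumes "A \<subseteq> {1..n}" "s permutes {1..n}" "evenperm s" "mon s A"
  shows "greenJ (AM n) (restr s A) (restr id A)" "greenJ (AM n) (restr s A) (restr id (s ` A))"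
proof -
  have inj: "inj s" using permutes_inj[OF assms(2)] .
  have sur: "\<And>x. s (inv s x) = x" using permutes_inverses(1)[OF assms(2)] .
  have sA: "s ` A \<subseteq> {1..n}" using assms(1) perm_in[OF assms(2)] by blast
  have I: "restr id {1..n} \<in> AM n" by (rule id_AM) simp
  have a: "restr s A \<in> AM n" using restr_AM assms by blast
  have ia: "restr (inv s) (s ` A) \<in> AM n" using inv_AM assms by blast
  have e1: "restr id A \<in> AM n" using id_AM assms(1) by blast
  have e2: "restr id (s ` A) \<in> AM n" using id_AM sA by blast
  show "greenJ (AM n) (restr s A) (restr id A)"
  proof (rule J_intro)
    show "restr s A \<in> ideal2 (AM n) (restr id A)"
      by (rule in_ideal[OF I a]) (use assms(1) in \<open>auto simp: pcomp_restr intro!: restr_eq\<close>)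
    show "restr id A \<in> ideal2 (AM n) (restr s A)"
      by (rule in_ideal[OF I ia]) (use assms(1) inj in \<open>auto simp: pcomp_restr intro!: restr_eq\<close>)
  qed
  show "greenJ (AM n) (restr s A) (restr id (s ` A))"
  proof (rule J_intro)
    show "restr s A \<in> ideal2 (AM n) (restr id (s ` A))"
      by (rule in_ideal[OF a I]) (use assms(1) sA in \<open>auto simp: pcomp_restr intro!: restr_eq\<close>)
    show "restr id (s ` A) \<in> ideal2 (AM n) (restr s A)"
      by (rule in_ideal[OF ia I]) (use assms(1) sA sur inj in \<open>auto simp: pcomp_restr intro!: restr_eq\<close>)
  qed
qed


lemma ran_restr: "ran (restr s A) = s ` A"
  by (auto simp: ran_def restr_def split: if_splits)

lemma dom_shape:
  assumes "A \<subseteq> {1..n}" "card A = n - 1" "n \<ge> 1"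
  shows "\<exists>d\<in>{1..n}. A = {1..n} - {d}"
proof -
  have "A \<noteq> {1..n}" using assms by auto
  then obtain d where d: "d \<in> {1..n}" "d \<notin> A" using assms(1) by blast
  have "A \<subseteq> {1..n} - {d}" using assms(1) d by blast
  moreover have "card ({1..n} - {d}) = n - 1" using d by simp
  ultimately have "A = {1..n} - {d}" using assms(2) by (intro card_subset_eq) auto
  then show ?thesis using d by blast
qed

lemma rank1:
  assumes "f \<in> AM n" "rank f = n - 1" "n \<ge> 1"
  shows "\<exists>s d. d \<in> {1..n} \<and> s permutes {1..n} \<and> evenperm s \<and> mon s ({1..n} - {d})
     \<and> f = restr s ({1..n} - {d}) \<and> dpt n f = d"
proof -
  obtain s A where sA: "A \<subseteq> {1..n}" "s permutes {1..n}" "evenperm s" "mon s A" "f = restr s A"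
    using assms(1) AM_char by blast
  have "rank f = card A" unfolding rank_def sA(5) ran_restr
    using permutes_inj[OF sA(2)] by (simp add: card_image inj_on_subset)
  then have "card A = n - 1" using assms(2) by simp
  then obtain d where d: "d \<in> {1..n}" "A = {1..n} - {d}" using dom_shape[OF sA(1) _ assms(3)] by blast
  have "dpt n f = d" unfolding dpt_def Omega_def sA(5) d(2) dom_restr
    by (rule the_equality) (use d(1) in auto)
  then show ?thesis using sA d by blast
qed

lemma J_iff:
  assumes "n \<ge> 1" "\<alpha> \<in> AM n" "\<beta> \<in> AM n" "rank \<alpha> = n - 1" "rank \<beta> = n - 1"
  shows "greenJ (AM n) \<alpha> \<beta> \<longleftrightarrow> Ep n (dpt n \<alpha>) (dpt n \<beta>)"
proof -
  obtain sa a where A: "a \<in> {1..n}" "sa permutes {1..n}" "evenperm sa" "mon sa ({1..n} - {a})"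
     "\<alpha> = restr sa ({1..n} - {a})" "dpt n \<alpha> = a"
    using rank1[OF assms(2,4,1)] by blast
  obtain sb b where B: "b \<in> {1..n}" "sb permutes {1..n}" "evenperm sb" "mon sb ({1..n} - {b})"
     "\<beta> = restr sb ({1..n} - {b})" "dpt n \<beta> = b"
    using rank1[OF assms(3,5,1)] by blast
  show ?thesis
  proof
    assume J: "greenJ (AM n) \<alpha> \<beta>"
    have I: "restr id {1..n} \<in> AM n" by (rule id_AM) simp
    have "\<alpha> \<in> ideal2 (AM n) \<alpha>"
    proof (rule in_ideal[OF I I])
      have "\<And>x. x \<in> {1..n} - {a} \<Longrightarrow> sa x \<in> {1..n}" using perm_in[OF A(2)] by blast
      then show "\<alpha> = pcomp (pcomp (restr id {1..n}) \<alpha>) (restr id {1..n})"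
        unfolding A(5) pcomp_restr by (intro restr_eq) auto
    qed
    then have "\<alpha> \<in> ideal2 (AM n) \<beta>" using J unfolding greenJ_def by simp
    then obtain u v where uv: "u \<in> AM n" "v \<in> AM n" "\<alpha> = pcomp (pcomp u \<beta>) v"
      unfolding ideal2_def by blast
    obtain s S where sS: "S \<subseteq> {1..n}" "s permutes {1..n}" "evenperm s" "mon s S" "u = restr s S"
      using uv(1) AM_char by blast
    obtain t T where tT: "v = restr t T"
      using uv(2) AM_char by blast
    have "dom \<alpha> = dom (pcomp (pcomp u \<beta>) v)" using uv(3) by simp
    then have D: "{1..n} - {a} = {x \<in> {x \<in> S. s x \<in> {1..n} - {b}}. (sb \<circ> s) x \<in> T}"
      unfolding A(5) sS(5) B(5) tT pcomp_restr dom_restr .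
    then have sub: "{1..n} - {a} \<subseteq> S" and img: "\<And>x. x \<in> {1..n} - {a} \<Longrightarrow> s x \<in> {1..n} - {b}"
      by blast+
    have "b \<in> s ` {1..n}" using B(1) permutes_image[OF sS(2)] by simp
    then obtain y where y: "y \<in> {1..n}" "s y = b" by blast
    have "y = a"
    proof (rule ccontr)
      assume "y \<noteq> a"
      then have "s y \<in> {1..n} - {b}" using img y(1) by blast
      then show False using y(2) by simp
    qed
    then have "s a = b" using y by simp
    moreover have "mon s ({1..n} - {a})" using mon_subset[OF sS(4) sub] .
    ultimately show "Ep n (dpt n \<alpha>) (dpt n \<beta>)" unfolding Ep_def A(6) B(6) using sS(2,3) by blast
  next
    assume "Ep n (dpt n \<alpha>) (dpt n \<beta>)"
    then obtain s where s: "s permutes {1..n}" "evenperm s" "s a = b" "mon s ({1..n} - {a})"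
      unfolding Ep_def A(6) B(6) by blast
    have sub: "{1..n} - {a} \<subseteq> {1..n}" by blast
    have im: "s ` ({1..n} - {a}) = {1..n} - {b}" using perm_img[OF s(1) A(1) s(3)] .
    have g1: "greenJ (AM n) (restr s ({1..n} - {a})) (restr id ({1..n} - {a}))"
      using G(1)[OF sub s(1,2,4)] .
    have g2: "greenJ (AM n) (restr s ({1..n} - {a})) (restr id ({1..n} - {b}))"
      using G(2)[OF sub s(1,2,4)] unfolding im .
    have g3: "greenJ (AM n) \<alpha> (restr id ({1..n} - {a}))"
      unfolding A(5) using G(1)[OF sub A(2,3,4)] .
    have g4: "greenJ (AM n) \<beta> (restr id ({1..n} - {b}))"
      unfolding B(5) using G(1)[OF _ B(2,3,4)] by blast
    show "greenJ (AM n) \<alpha> \<beta>" using g1 g2 g3 g4 unfolding greenJ_def by simp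
  qed
qed

lemma arith1: "n mod 4 = 0 \<or> n mod 4 = 3 \<Longrightarrow> (even (a + b) \<or> even (a + b + n + 1 + n div 2))" for a b n :: nat
    by presburger

lemma arith2: "n mod 4 = 1 \<or> n mod 4 = 2 \<Longrightarrow>
     ((even (a + b) \<or> even (a + b + n + 1 + n div 2)) \<longleftrightarrow> (even a \<longleftrightarrow> even b))" for a b n :: nat
    by presburger

theorem proposition2p5:
  fixes n :: nat and \<alpha> \<beta> :: "nat \<Rightarrow> nat option"
  assumes "n \<ge> 2"
    and "\<alpha> \<in> AM n" and "\<beta> \<in> AM n"
    and "rank \<alpha> = n - 1" and "rank \<beta> = n - 1"
  shows "(n mod 4 = 0 \<or> n mod 4 = 3 \<longrightarrow> greenJ (AM n) \<alpha> \<beta>)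
       \<and> (n mod 4 = 1 \<or> n mod 4 = 2 \<longrightarrow>
            (greenJ (AM n) \<alpha> \<beta> \<longleftrightarrow> (even (dpt n \<alpha>) \<longleftrightarrow> even (dpt n \<beta>))))"
proof -
  have n1: "n \<ge> 1" using assms(1) by simp
  obtain a where A: "a \<in> {1..n}" "dpt n \<alpha> = a"
    using rank1[OF assms(2,4) n1] by blast
  obtain b where B: "b \<in> {1..n}" "dpt n \<beta> = b"
    using rank1[OF assms(3,5) n1] by blast
  have E: "greenJ (AM n) \<alpha> \<beta> \<longleftrightarrow> Ep n a b"
    using J_iff[OF n1 assms(2-5)] unfolding A(2) B(2) .
  have P: "Ep n a b \<longleftrightarrow> (even (a + b) \<or> even (a + b + n + 1 + n div 2))"
  proof
    assume "Ep n a b" then show "even (a + b) \<or> even (a + b + n + 1 + n div 2)"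
      by (rule Ep_imp[OF _ A(1) B(1)])
  next
    assume "even (a + b) \<or> even (a + b + n + 1 + n div 2)" then show "Ep n a b"
      by (rule imp_Ep[OF _ A(1) B(1)])
  qed
  have key: "greenJ (AM n) \<alpha> \<beta> \<longleftrightarrow> (even (a + b) \<or> even (a + b + n + 1 + n div 2))"
    using E P by simp
  note c1 = arith1[of n a b]
  note c2 = arith2[of n a b]
  show ?thesis unfolding A(2) B(2)
  proof (intro conjI impI)
    assume h: "n mod 4 = 0 \<or> n mod 4 = 3"
    show "greenJ (AM n) \<alpha> \<beta>" by (rule iffD2[OF key c1[OF h]])
  next
    assume h: "n mod 4 = 1 \<or> n mod 4 = 2"
    show "greenJ (AM n) \<alpha> \<beta> = (even a = even b)" by (rule trans[OF key c2[OF h]])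
  qed
qed

end
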